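(* Let $N\geq 3$ be prime, $q\in\mathbb{C}$ with $q^N=1$, $q\neq1$, and let $X$ be a topological space. Let $\tau:\Delta^m\to X$ be a singular $m$-simplex, $m\geq 0$, and let $T_j=\tau(e_j)$ for $j=0,\dots,m$, regarded as singular $0$-simplices. Then $$\partial^m(\tau)=[m]_q!\cdot\sum_{j=0}^m q^j\,T_{m-j}.$$
   Context: $[k]_q=1+q+\cdots+q^{k-1}$ and $[m]_q!=[1]_q[2]_q\cdots[m]_q$, $[0]_q!=1$. $C^q_n(X)$ is the free $\mathbb{Z}[q]$-module on singular $n$-simplices $\sigma:\Delta^n\to X$, where $\Delta^n$ is the convex hull of the standard basis $e_0,\dots,e_n$ of $\mathbb{R}^{n+1}$; a singular $0$-simplex is identified with its image point. Face maps $\partial_j\sigma=\sigma\circ\lambda_j$, where $\lambda_j:\Delta^{n-1}\to\Delta^n$ is the affine map sending $e_0,\dots,e_{n-1}$ in order to $e_0,\dots,\widehat{e_j},\dots,e_n$; the border map is $\partial=\sum_{j=0}^n q^j\partial_j$ on $C^q_n(X)$ for $n\ge1$, extended linearly, and $\partial^m$ is its $m$-fold composition. *)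

theory Defs
  imports "HOL-Homology.Homology" "HOL-Library.Poly_Mapping" "HOL-Computational_Algebra.Primes"
begin

text \<open>Chains with complex coefficients (the coefficient ring Z[q] is taken inside C,
  since q is a given complex number): finitely supported functions on singular
  simplices, i.e. functions (nat => real) => 'a restricted to the standard simplex,
  as in HOL-Homology.\<close>
type_synonym 'a qchain = "((nat \<Rightarrow> real) \<Rightarrow> 'a) \<Rightarrow>\<^sub>0 complex"

definition qint :: "complex \<Rightarrow> nat \<Rightarrow> complex" where
  "qint q k = (\<Sum>i<k. q ^ i)"

definition qfact :: "complex \<Rightarrow> nat \<Rightarrow> complex" where
  "qfact q m = (\<Prod>k=1..m. qint q k)"

definition cscale :: "complex \<Rightarrow> 'a qchain \<Rightarrow> 'a qchain" where
  "cscale a c = Poly_Mapping.map (\<lambda>x. a * x) c"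

text \<open>HOL-Homology's
  singular_face p k is precomposition with the affine map lambda_k.\<close>
definition qbd :: "complex \<Rightarrow> nat \<Rightarrow> 'a qchain \<Rightarrow> 'a qchain" where
  "qbd q p c = (if p = 0 then 0 else
     (\<Sum>\<sigma>\<in>Poly_Mapping.keys c. \<Sum>k\<le>p. Poly_Mapping.single (singular_face p k \<sigma>) (q ^ k * Poly_Mapping.lookup c \<sigma>)))"

fun qbd_pow :: "complex \<Rightarrow> nat \<Rightarrow> nat \<Rightarrow> 'a qchain \<Rightarrow> 'a qchain" where
  "qbd_pow q 0 p c = c"
| "qbd_pow q (Suc k) p c = qbd_pow q k (p - 1) (qbd q p c)"

definition std_basis :: "nat \<Rightarrow> nat \<Rightarrow> real" where
  "std_basis j = (\<lambda>i. if i = j then 1 else 0)"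

definition point_simplex :: "'a \<Rightarrow> (nat \<Rightarrow> real) \<Rightarrow> 'a" where
  "point_simplex x = restrict (\<lambda>_. x) (standard_simplex 0)"

end

theory Submission imports Defs begin

lemma single_sum: "finite S \<Longrightarrow> Poly_Mapping.single x (\<Sum>y\<in>S. f y) = (\<Sum>y\<in>S. Poly_Mapping.single x (f y))"
  by (induction S rule: finite_induct) (auto simp: single_add)

lemma cscale_sum: "finite S \<Longrightarrow> cscale a (\<Sum>y\<in>S. Poly_Mapping.single (g y) (f y)) = (\<Sum>y\<in>S. Poly_Mapping.single (g y) (a * f y))"
proof (induction S rule: finite_induct)
  case empty then show ?case by (simp add: cscale_def poly_mapping_eqI map.rep_eq)
next
  case (insert x F)
  have "cscale a (c1 + c2) = cscale a c1 + cscale a c2" for c1 c2 :: "'b qchain"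
    by (rule poly_mapping_eqI) (auto simp: cscale_def map.rep_eq lookup_add when_def simp flip: distrib_left)
  then show ?case using insert by (simp add: cscale_def)
qed

lemma qbd_alt:
  assumes "finite S" "Poly_Mapping.keys c \<subseteq> S" "p \<noteq> 0"
  shows "qbd q p c = (\<Sum>\<sigma>\<in>S. \<Sum>k\<le>p. Poly_Mapping.single (singular_face p k \<sigma>) (q ^ k * Poly_Mapping.lookup c \<sigma>))"
  unfolding qbd_def using assms
  by (auto intro!: sum.mono_neutral_left simp: in_keys_iff)

lemma qbd_add: "qbd q p (c1 + c2) = qbd q p c1 + qbd q p c2"
proof (cases "p = 0")
  case True then show ?thesis by (simp add: qbd_def)
next
  case False
  let ?S = "Poly_Mapping.keys c1 \<union> Poly_Mapping.keys c2"
  have k: "Poly_Mapping.keys (c1 + c2) \<subseteq> ?S" by (rule keys_add)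
  show ?thesis
    using False
    apply (subst qbd_alt[OF _ k False], simp)
    apply (subst qbd_alt[of ?S c1], simp, simp, simp)
    apply (subst qbd_alt[of ?S c2], simp, simp, simp)
    by (simp add: lookup_add distrib_left single_add sum.distrib)
qed

lemma qbd_zero: "qbd q p 0 = 0" by (simp add: qbd_def)

lemma qbd_single: "p \<noteq> 0 \<Longrightarrow> qbd q p (Poly_Mapping.single \<sigma> a) = (\<Sum>k\<le>p. Poly_Mapping.single (singular_face p k \<sigma>) (q ^ k * a))"
  by (subst qbd_alt[of "{\<sigma>}"]) auto

lemma qbd_pow_add: "qbd_pow q n p (c1 + c2) = qbd_pow q n p c1 + qbd_pow q n p c2"
  by (induction n arbitrary: p c1 c2) (simp_all add: qbd_add)

lemma qbd_pow_zero: "qbd_pow q n p 0 = 0"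
  by (induction n arbitrary: p) (simp_all add: qbd_zero)

lemma qbd_pow_sum: "finite S \<Longrightarrow> qbd_pow q n p (\<Sum>y\<in>S. f y) = (\<Sum>y\<in>S. qbd_pow q n p (f y))"
  by (induction S rule: finite_induct) (simp_all add: qbd_pow_add qbd_pow_zero)

lemma std_basis_in: "i \<le> m \<Longrightarrow> std_basis i \<in> standard_simplex m"
  by (auto simp: standard_simplex_def std_basis_def)

lemma face_basis: "simplical_face k (std_basis i) = std_basis (if i < k then i else Suc i)"
  by (auto simp: simplical_face_def std_basis_def fun_eq_iff)

lemma singular_face_basis: "i \<le> m \<Longrightarrow> singular_face (Suc m) k \<tau> (std_basis i) = \<tau> (std_basis (if i < k then i else Suc i))"
  by (simp add: singular_face_def std_basis_in face_basis)

lemma ext0: "\<tau> \<in> extensional (standard_simplex 0) \<Longrightarrow> \<tau> = point_simplex (\<tau> (std_basis 0))"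
proof
  fix x assume "\<tau> \<in> extensional (standard_simplex 0)"
  moreover have "x \<in> standard_simplex 0 \<Longrightarrow> x = std_basis 0"
    by (auto simp: standard_simplex_def std_basis_def fun_eq_iff)
  ultimately show "\<tau> x = point_simplex (\<tau> (std_basis 0)) x"
    by (auto simp: point_simplex_def extensional_def)
qed

lemma group_single:
  assumes "finite A" "finite B" "g ` A \<subseteq> B"
  shows "(\<Sum>x\<in>A. Poly_Mapping.single (P (g x)) (w x)) = (\<Sum>t\<in>B. Poly_Mapping.single (P t) (\<Sum>x\<in>{x\<in>A. g x = t}. w x))"
proof -
  have "(\<Sum>x\<in>A. Poly_Mapping.single (P (g x)) (w x)) = (\<Sum>t\<in>B. \<Sum>x\<in>{x\<in>A. g x = t}. Poly_Mapping.single (P (g x)) (w x))"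
    by (rule sum.group[OF assms, symmetric])
  also have "\<dots> = (\<Sum>t\<in>B. \<Sum>x\<in>{x\<in>A. g x = t}. Poly_Mapping.single (P t) (w x))"
    by (intro sum.cong) auto
  also have "\<dots> = (\<Sum>t\<in>B. Poly_Mapping.single (P t) (\<Sum>x\<in>{x\<in>A. g x = t}. w x))"
    using assms by (simp add: single_sum)
  finally show ?thesis .
qed

lemma reindex_sum:
  assumes "t \<le> Suc m"
  shows "(\<Sum>k\<in>{..Suc m}-{t}. (q::complex) ^ (if k < t then k else k - 1)) = (\<Sum>i<Suc m. q ^ i)"
proof -
  have "bij_betw (\<lambda>k. if k < t then k else k - 1) ({..Suc m}-{t}) {..<Suc m}"
    by (rule bij_betw_byWitness[where f'="\<lambda>i. if i < t then i else Suc i"]) (use assms in auto)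
  then show ?thesis by (rule sum.reindex_bij_betw)
qed

lemma coeff:
  assumes t: "t \<le> Suc m"
  shows "(\<Sum>k\<le>Suc m. \<Sum>j\<in>{j. j \<le> m \<and> (if m - j < k then m - j else Suc (m - j)) = t}.
            q ^ k * a * qfact q m * q ^ j)
       = (\<Sum>j\<in>{j. j \<le> Suc m \<and> Suc m - j = t}. a * qfact q (Suc m) * q ^ j)"
proof -
  have R: "{j. j \<le> Suc m \<and> Suc m - j = t} = {Suc m - t}" using t by auto
  have L: "{j. j \<le> m \<and> (if m - j < k then m - j else Suc (m - j)) = t} =
     (if k = t then {} else if t < k then {m - t} else {Suc m - t})" if "k \<le> Suc m" for k
    using that t by (auto split: if_splits)
  have "(\<Sum>k\<le>Suc m. \<Sum>j\<in>{j. j \<le> m \<and> (if m - j < k then m - j else Suc (m - j)) = t}.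
            q ^ k * a * qfact q m * q ^ j)
      = (\<Sum>k\<le>Suc m. if k = t then 0 else (a * qfact q m * q ^ (Suc m - t)) * q ^ (if k < t then k else k - 1))"
  proof (rule sum.cong[OF refl])
    fix k assume k: "k \<in> {..Suc m}"
    show "(\<Sum>j\<in>{j. j \<le> m \<and> (if m - j < k then m - j else Suc (m - j)) = t}. q ^ k * a * qfact q m * q ^ j)
       = (if k = t then 0 else (a * qfact q m * q ^ (Suc m - t)) * q ^ (if k < t then k else k - 1))"
    proof -
      consider "k = t" | "t < k" | "k < t" by linarith
      then show ?thesis
      proof cases
        case 1 then show ?thesis using k by (simp add: L)
      next
        case 2
        then have e: "k + (m - t) = (k - 1) + (Suc m - t)" using k by auto
        have "q ^ k * q ^ (m - t) = q ^ (Suc m - t) * q ^ (k - 1)"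
          by (simp only: power_add[symmetric] e) (simp add: ac_simps)
        then show ?thesis using 2 k by (simp add: L algebra_simps)
      next
        case 3 then show ?thesis using k by (simp add: L algebra_simps)
      qed
    qed
  qed
  also have "\<dots> = (\<Sum>k\<in>{..Suc m}-{t}. (a * qfact q m * q ^ (Suc m - t)) * q ^ (if k < t then k else k - 1))"
    by (subst sum.mono_neutral_right[of "{..Suc m}" "{..Suc m}-{t}"]) auto
  also have "\<dots> = a * qfact q m * q ^ (Suc m - t) * (\<Sum>i<Suc m. q ^ i)"
    by (simp add: sum_distrib_left[symmetric] reindex_sum[OF t])
  also have "\<dots> = (\<Sum>j\<in>{j. j \<le> Suc m \<and> Suc m - j = t}. a * qfact q (Suc m) * q ^ j)"
    by (simp add: R qfact_def qint_def prod.cl_ivl_Suc)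
  finally show ?thesis .
qed

lemma main:
  "\<tau> \<in> extensional (standard_simplex m) \<Longrightarrow>
   qbd_pow q m m (Poly_Mapping.single \<tau> a) =
   (\<Sum>j\<le>m. Poly_Mapping.single (point_simplex (\<tau> (std_basis (m - j)))) (a * qfact q m * q ^ j))"
proof (induction m arbitrary: \<tau> a)
  case 0
  then show ?case by (simp add: qfact_def ext0[symmetric])
next
  case (Suc m)
  let ?P = "\<lambda>t. point_simplex (\<tau> (std_basis t))"
  let ?g = "\<lambda>k j. if m - j < k then m - j else Suc (m - j)"
  have ext: "singular_face (Suc m) k \<tau> \<in> extensional (standard_simplex m)" for k
    by (simp add: singular_face_def)
  have "qbd_pow q (Suc m) (Suc m) (Poly_Mapping.single \<tau> a)
      = qbd_pow q m m (\<Sum>k\<le>Suc m. Poly_Mapping.single (singular_face (Suc m) k \<tau>) (q ^ k * a))"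
    by (simp add: qbd_single)
  also have "\<dots> = (\<Sum>k\<le>Suc m. \<Sum>j\<le>m. Poly_Mapping.single (?P (?g k j)) (q ^ k * a * qfact q m * q ^ j))"
    unfolding qbd_pow_sum[OF finite_atMost] Suc.IH[OF ext]
    by (intro sum.cong refl) (simp add: singular_face_basis mult.assoc)
  also have "\<dots> = (\<Sum>k\<le>Suc m. \<Sum>t\<le>Suc m. Poly_Mapping.single (?P t)
        (\<Sum>j\<in>{j\<in>{..m}. ?g k j = t}. q ^ k * a * qfact q m * q ^ j))"
    by (intro sum.cong refl group_single) auto
  also have "\<dots> = (\<Sum>t\<le>Suc m. \<Sum>k\<le>Suc m. Poly_Mapping.single (?P t)
        (\<Sum>j\<in>{j\<in>{..m}. ?g k j = t}. q ^ k * a * qfact q m * q ^ j))"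
    by (rule sum.swap)
  also have "\<dots> = (\<Sum>t\<le>Suc m. Poly_Mapping.single (?P t)
        (\<Sum>k\<le>Suc m. \<Sum>j\<in>{j\<in>{..m}. ?g k j = t}. q ^ k * a * qfact q m * q ^ j))"
    by (intro sum.cong refl) (rule single_sum[symmetric], simp)
  also have "\<dots> = (\<Sum>t\<le>Suc m. Poly_Mapping.single (?P t)
        (\<Sum>j\<in>{j\<in>{..Suc m}. Suc m - j = t}. a * qfact q (Suc m) * q ^ j))"
    using coeff by (intro sum.cong refl) auto
  also have "\<dots> = (\<Sum>j\<le>Suc m. Poly_Mapping.single (?P (Suc m - j)) (a * qfact q (Suc m) * q ^ j))"
    by (rule group_single[symmetric]) auto
  finally show ?case .
qed

theorem lemma4p5:
  fixes N :: nat and q :: complex and X :: "'a topology"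
    and \<tau> :: "(nat \<Rightarrow> real) \<Rightarrow> 'a" and m :: nat
  assumes "N \<ge> 3" and "prime N" and "q ^ N = 1" and "q \<noteq> 1"
    and "singular_simplex m X \<tau>"
  shows "qbd_pow q m m (Poly_Mapping.single \<tau> 1) =
         cscale (qfact q m)
           (\<Sum>j\<le>m. Poly_Mapping.single (point_simplex (\<tau> (std_basis (m - j)))) (q ^ j))"
proof -
  have "\<tau> \<in> extensional (standard_simplex m)" using assms(5) by (simp add: singular_simplex_def)
  then show ?thesis by (simp add: main cscale_sum)
qed

end
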